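(* Let $m$ be an integer and $i\geq 2$. (i) If $m=N_i(1+(x-1)^5h(x))$ for some $h\in\mathbb Z[x]$, then for every $2\leq j\leq i$ there is $h_j\in\mathbb Z[x]$ with $m=N_j(1+(x-1)^5h_j(x))$ and $3\mid h_j(1)$ if and only if $3\mid h(1)$; and there are integers $A,B$ with $3m=N_1(1-x+9(A+B(1-x)))$, where $3\nmid A$ if $3\nmid h(1)$ and $3\mid A$ if $3\mid h(1)$. (ii) If $m=N_i(1+(x-1)^7t(x))$ for some $t\in\mathbb Z[x]$, then for every $2\leq j\leq i$ there is $t_j\in\mathbb Z[x]$ with $m=N_j(1+(x-1)^7t_j(x))$ and $3\mid t_j(1)$ if and only if $3\mid t(1)$.
   Context: For $k\geq1$, $\omega_k=e^{2\pi i/3^k}$ and $N_k(F)=\prod_{1\leq \ell\leq 3^k,\ 3\nmid \ell}F(\omega_k^\ell)$. *)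

theory Defs
  imports Complex_Main "HOL-Computational_Algebra.Polynomial"
begin

definition omega :: "nat \<Rightarrow> complex" where
  "omega k = cis (2 * pi / 3 ^ k)"

definition Nk :: "nat \<Rightarrow> int poly \<Rightarrow> complex" where
  "Nk k F = (\<Prod>l \<in> {l::nat. 1 \<le> l \<and> l \<le> 3 ^ k \<and> \<not> 3 dvd l}.
               poly (map_poly of_int F) (omega k ^ l))"

end

theory Submission
  imports Defs
begin
definition ev :: "int poly \<Rightarrow> complex \<Rightarrow> complex" where
  "ev p z = poly (map_poly of_int p) z"

lemma map_poly_of_int_add: "map_poly (of_int :: int \<Rightarrow> 'a::comm_ring_1) (p + q) = map_poly of_int p + map_poly of_int q"
  by (rule poly_eqI) (simp add: coeff_map_poly)

lemma map_poly_of_int_mult: "map_poly (of_int :: int \<Rightarrow> 'a::comm_ring_1) (p * q) = map_poly of_int p * map_poly of_int q"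
proof (induction p)
  case 0 then show ?case by simp
next
  case (pCons a p)
  then show ?case by (simp add: map_poly_pCons map_poly_of_int_add map_poly_smult)
qed

lemma ev_add[simp]: "ev (p + q) z = ev p z + ev q z"
  by (simp add: ev_def map_poly_of_int_add)
lemma ev_mult[simp]: "ev (p * q) z = ev p z * ev q z"
  by (simp add: ev_def map_poly_of_int_mult)
lemma ev_uminus[simp]: "ev (- p) z = - ev p z"
  unfolding ev_def by (metis add_eq_0_iff map_poly_of_int_add map_poly_0 poly_0 poly_add)
lemma ev_diff[simp]: "ev (p - q) z = ev p z - ev q z"
  using ev_add[of p "-q" z] by simp
lemma ev_pCons[simp]: "ev (pCons a p) z = of_int a + z * ev p z"
  by (simp add: ev_def map_poly_pCons)
lemma ev_0[simp]: "ev 0 z = 0" by (simp add: ev_def)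
lemma ev_1[simp]: "ev 1 z = 1" by (simp add: ev_def)
lemma ev_power[simp]: "ev (p ^ n) z = ev p z ^ n"
  by (induction n) simp_all
lemma ev_numeral[simp]: "ev (numeral n) z = numeral n"
  by (metis ev_def map_poly_pCons of_int_numeral pCons_0_0 poly_pCons numeral_poly add_0_right mult_zero_right poly_0 map_poly_0 of_int_0)
lemma ev_of_int_poly: "ev p (of_int a) = of_int (poly p a)"
proof (induction p)
  case 0 then show ?case by simp
next
  case (pCons b p) then show ?case by simp
qed

lemma decomp3: fixes p :: "int poly"
  shows "\<exists>a b c. (\<forall>v. ev p v = ev a (v^3) + v * ev b (v^3) + v^2 * ev c (v^3)) \<and>
                 poly p 1 = poly a 1 + poly b 1 + poly c 1"
proof (induction p)
  case 0 then show ?case by (intro exI[of _ 0]) simp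
next
  case (pCons d p)
  then obtain a b c where h: "\<forall>v. ev p v = ev a (v^3) + v * ev b (v^3) + v^2 * ev c (v^3)"
    and h1: "poly p 1 = poly a 1 + poly b 1 + poly c 1" by blast
  show ?case
  proof (intro exI conjI allI)
    fix v :: complex
    show "ev (pCons d p) v = ev (pCons d 0 + pCons 0 c) (v^3) + v * ev a (v^3) + v^2 * ev b (v^3)"
      using h[rule_format, of v] by (simp add: algebra_simps power2_eq_square power3_eq_cube)
    show "poly (pCons d p) 1 = poly (pCons d 0 + pCons 0 c) 1 + poly a 1 + poly b 1"
      using h1 by simp
  qed
qed

lemma norm3:
  fixes a b c w u :: complex
  assumes "u^2 + u + 1 = 0"
  shows "(a + w*b + w^2*c) * (a + (u*w)*b + (u*w)^2*c) * (a + (u^2*w)*b + (u^2*w)^2*c)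
       = a^3 + w^3*b^3 + (w^3)^2*c^3 - 3*w^3*a*b*c"
  using assms by algebra

definition S :: "nat \<Rightarrow> nat set" where
  "S k = {l::nat. 1 \<le> l \<and> l \<le> 3 ^ k \<and> \<not> 3 dvd l}"

definition w3 :: complex where "w3 = cis (2 * pi / 3)"

lemma finite_S[simp]: "finite (S k)" unfolding S_def by (rule finite_subset[of _ "{..3^k}"]) auto

lemma Nk_ev: "Nk k F = (\<Prod>l\<in>S k. ev F (omega k ^ l))"
  unfolding Nk_def S_def ev_def by simp

lemma w3_cube: "w3 ^ 3 = 1"
  unfolding w3_def by (simp add: DeMoivre)

lemma w3_ne1: "w3 \<noteq> 1"
proof
  assume "w3 = 1"
  then have "Im w3 = 0" by simp
  moreover have "sin (2 * pi / 3) > 0" by (rule sin_gt_zero) auto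
  ultimately show False unfolding w3_def by simp
qed

lemma w3_eq: "w3^2 + w3 + 1 = 0"
proof -
  have "(w3 - 1) * (w3^2 + w3 + 1) = w3^3 - 1" by (simp add: algebra_simps power2_eq_square power3_eq_cube)
  also have "\<dots> = 0" by (simp add: w3_cube)
  finally show ?thesis using w3_ne1 by simp
qed

lemma w3_pow_eq: assumes "\<not> 3 dvd l" shows "(w3^l)^2 + w3^l + 1 = 0"
proof -
  have "w3^l = w3^(l mod 3)"
    by (metis (no_types) div_mult_mod_eq power_add power_mult w3_cube power_one mult_1 mult.commute)
  moreover have "l mod 3 = 1 \<or> l mod 3 = 2" using assms by presburger
  moreover have "w3^4 = w3" proof -
    have "w3^4 = w3^3 * w3" by (simp add: power_Suc2[symmetric] eval_nat_numeral)
    then show ?thesis using w3_cube by simp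
  qed
  ultimately show ?thesis using w3_eq
    by (auto simp: power_mult[symmetric]; metis add.commute add.left_commute)
qed

lemma omega_pow_3k: "omega (Suc k) ^ (3^k) = w3"
  unfolding omega_def w3_def by (simp add: DeMoivre field_simps)

lemma omega_cube: "(omega (Suc k) ^ l) ^ 3 = omega k ^ l"
proof -
  have "omega (Suc k) ^ 3 = omega k" unfolding omega_def by (simp add: DeMoivre field_simps)
  then show ?thesis by (metis power_mult mult.commute)
qed

lemma omega_prim: assumes "k \<ge> 1" "l \<in> S k"
  shows "((omega k ^ l)^(3^(k-1)))^2 + (omega k ^ l)^(3^(k-1)) + 1 = 0"
proof -
  obtain k' where k: "k = Suc k'" using assms by (cases k) auto
  have "(omega k ^ l)^(3^(k-1)) = w3 ^ l"
    using omega_pow_3k[of k'] k by (metis diff_Suc_1 power_mult mult.commute)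
  then show ?thesis using w3_pow_eq assms(2) by (simp add: S_def)
qed

lemma S_Suc: assumes "k \<ge> 1"
  shows "S (Suc k) = (\<lambda>(l,s). l + s * 3^k) ` (S k \<times> {..<3})"
    and "inj_on (\<lambda>(l,s). l + s * 3^k) (S k \<times> {..<3})"
proof -
  have d: "3 dvd (3::nat)^k" using assms by (cases k) auto
  show "S (Suc k) = (\<lambda>(l,s). l + s * 3^k) ` (S k \<times> {..<3})"
  proof (intro equalityI subsetI)
    fix L assume L: "L \<in> S (Suc k)"
    define l where "l = L mod 3^k"
    define s where "s = L div 3^k"
    have eq: "L = l + s * 3^k" unfolding l_def s_def using mod_div_mult_eq[of L "3^k"] by simp
    have "l \<noteq> 0" proof
      assume "l = 0" then have "3^k dvd L" unfolding l_def by auto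
      then show False using L d unfolding S_def by (auto dest: dvd_trans)
    qed
    moreover have "l \<le> 3^k" unfolding l_def by (simp add: less_imp_le)
    moreover have "\<not> 3 dvd l" using L eq d unfolding S_def by (auto simp: dvd_add_left_iff dvd_mult)
    moreover have "L \<noteq> 3^Suc k" using L unfolding S_def by auto
    then have "L < 3 * 3^k" using L unfolding S_def by auto
    then have "s < 3" unfolding s_def by (simp add: div_less_iff_less_mult)
    ultimately show "L \<in> (\<lambda>(l,s). l + s * 3^k) ` (S k \<times> {..<3})"
      using eq unfolding S_def by (auto intro!: image_eqI[of _ _ "(l,s)"])
  next
    fix L assume "L \<in> (\<lambda>(l,s). l + s * 3^k) ` (S k \<times> {..<3})"
    then obtain l s where L: "L = l + s * 3^k" "l \<in> S k" "s < 3" by auto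
    have "s * 3^k \<le> 2 * 3^k" using L by auto
    moreover have "l \<le> 3^k" using L unfolding S_def by auto
    ultimately have "L \<le> 3 * 3^k" using L(1) by linarith
    then show "L \<in> S (Suc k)" using L d unfolding S_def by (auto simp: dvd_add_left_iff dvd_mult)
  qed
  show "inj_on (\<lambda>(l,s). l + s * 3^k) (S k \<times> {..<3})"
  proof (rule inj_onI, clarify)
    fix l s l' s' assume a: "l \<in> S k" "s < (3::nat)" "l' \<in> S k" "s' < (3::nat)" "l + s * 3^k = l' + s' * 3^k"
    have "l < 3^k" using a(1) d unfolding S_def by (metis le_neq_implies_less mem_Collect_eq)
    moreover have "l' < 3^k" using a(3) d unfolding S_def by (metis le_neq_implies_less mem_Collect_eq)
    ultimately have "(l + s * 3^k) mod 3^k = l" "(l' + s' * 3^k) mod 3^k = l'"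
        "(l + s * 3^k) div 3^k = s" "(l' + s' * 3^k) div 3^k = s'" by auto
    then show "l = l' \<and> s = s'" using a(5) by metis
  qed
qed

lemma Nk_Suc: assumes "k \<ge> 1"
  shows "Nk (Suc k) F = (\<Prod>l\<in>S k. \<Prod>s<3. ev F (omega (Suc k) ^ l * w3 ^ s))"
proof -
  have "Nk (Suc k) F = (\<Prod>p\<in>S k \<times> {..<3}. ev F (omega (Suc k) ^ (case p of (l,s) \<Rightarrow> l + s * 3^k)))"
    unfolding Nk_ev S_Suc(1)[OF assms] by (subst prod.reindex[OF S_Suc(2)[OF assms]]) (simp add: o_def)
  also have "\<dots> = (\<Prod>p\<in>S k \<times> {..<3}. ev F (omega (Suc k) ^ fst p * w3 ^ snd p))"
    by (rule prod.cong) (auto simp: power_add power_mult omega_pow_3k mult.commute[of _ "3^k"])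
  also have "\<dots> = (\<Prod>l\<in>S k. \<Prod>s<3. ev F (omega (Suc k) ^ l * w3 ^ s))"
    unfolding prod.cartesian_product by (simp add: case_prod_beta)
  finally show ?thesis .
qed

definition nf :: "complex \<Rightarrow> complex \<Rightarrow> complex \<Rightarrow> complex \<Rightarrow> complex" where
  "nf a b c z = a^3 + z*b^3 + z^2*c^3 - 3*z*a*b*c"

abbreviation pX :: "int poly" where "pX \<equiv> [:0,1:]"

lemma ev_pX[simp]: "ev pX z = z" by simp
lemma ev_X1[simp]: "ev [:-1,1:] z = z - 1" by simp

lemma cube_root: "\<exists>w::complex. w^3 = z"
proof -
  have "(rcis (root 3 (cmod z)) (Arg z / 3)) ^ 3 = rcis (root 3 (cmod z) ^ 3) (Arg z)"
    by (simp add: DeMoivre2)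
  also have "\<dots> = z" by (simp add: rcis_cmod_Arg)
  finally show ?thesis by blast
qed

lemma prod3: "(\<Prod>s\<in>{..<3::nat}. f s) = f 0 * f 1 * (f 2 :: complex)"
  by (simp add: eval_nat_numeral)

lemma norm3':
  fixes w u :: complex
  assumes u: "u^2 + u + 1 = 0" and dec: "\<forall>v. f v = a (v^3) + v * b (v^3) + v^2 * c (v^3)"
  shows "f w * f (w*u) * f (w*u^2) = nf (a (w^3)) (b (w^3)) (c (w^3)) (w^3)"
proof -
  have u3: "u^3 = 1" proof -
    have "u^3 - 1 = (u - 1) * (u^2+u+1)" by (simp add: algebra_simps power2_eq_square power3_eq_cube)
    then show ?thesis using u by simp
  qed
  have e1: "(w*u)^3 = w^3" using u3 by (simp add: power_mult_distrib)
  have "(u^2)^3 = (u^3)^2" by (metis power_mult mult.commute)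
  then have e2: "(w*u^2)^3 = w^3" using u3 by (simp add: power_mult_distrib)
  show ?thesis
    unfolding dec[rule_format, of w] dec[rule_format, of "w*u"] dec[rule_format, of "w*u^2"] e1 e2 nf_def
    using norm3[OF u, of "a (w^3)" w "b (w^3)" "c (w^3)"] by (simp add: algebra_simps)
qed

lemma descent:
  assumes k: "k \<ge> 1" and dec: "\<forall>v. ev F v = ev A (v^3) + v * ev B (v^3) + v^2 * ev C (v^3)"
  shows "Nk (Suc k) F = (\<Prod>l\<in>S k. nf (ev A (omega k ^ l)) (ev B (omega k ^ l)) (ev C (omega k ^ l)) (omega k ^ l))"
  unfolding Nk_Suc[OF k]
proof (rule prod.cong[OF refl])
  fix l
  have "(\<Prod>s<3. ev F (omega (Suc k) ^ l * w3 ^ s)) = ev F (omega (Suc k) ^ l) * ev F (omega (Suc k) ^ l * w3) * ev F (omega (Suc k) ^ l * w3^2)"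
    by (simp add: prod3)
  also have "\<dots> = nf (ev A ((omega (Suc k) ^ l)^3)) (ev B ((omega (Suc k) ^ l)^3)) (ev C ((omega (Suc k) ^ l)^3)) ((omega (Suc k) ^ l)^3)"
    by (rule norm3'[OF w3_eq, where f = "ev F" and a = "ev A" and b = "ev B" and c = "ev C"]) (use dec in blast)
  finally show "(\<Prod>s<3. ev F (omega (Suc k) ^ l * w3 ^ s)) = nf (ev A (omega k ^ l)) (ev B (omega k ^ l)) (ev C (omega k ^ l)) (omega k ^ l)"
    by (simp add: omega_cube)
qed

lemma nf_shift: "nf (1 + a) b c z = 1 + 3 * (a + a^2 - z*b*c) + nf a b c z"
  unfolding nf_def by (simp add: algebra_simps power2_eq_square power3_eq_cube)

lemma lin3: assumes u: "u^2 + u + 1 = 0" shows "(w - 1) * (w*u - 1) * (w*u^2 - 1) = w^3 - (1::complex)"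
  using u by algebra

lemma nf_mult:
  assumes hQ: "\<forall>v. (v - 1)^n = ev Q0 (v^3) + v * ev Q1 (v^3) + v^2 * ev Q2 (v^3)"
      and hH: "\<forall>v. ev h v = ev H0 (v^3) + v * ev H1 (v^3) + v^2 * ev H2 (v^3)"
  defines "A \<equiv> Q0*H0 + pX*(Q1*H2 + Q2*H1)" and "B \<equiv> Q0*H1 + Q1*H0 + pX*Q2*H2"
      and "C \<equiv> Q0*H2 + Q1*H1 + Q2*H0"
  shows "\<forall>v. ev ([:-1,1:]^n * h) v = ev A (v^3) + v * ev B (v^3) + v^2 * ev C (v^3)"
    and "nf (ev A z) (ev B z) (ev C z) z = (z - 1)^n * nf (ev H0 z) (ev H1 z) (ev H2 z) z"
proof -
  have gen: "(q0 + v*q1 + v^2*q2) * (h0 + v*h1 + v^2*h2) =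
     (q0*h0 + v^3*(q1*h2+q2*h1)) + v*(q0*h1+q1*h0+v^3*q2*h2) + v^2*(q0*h2+q1*h1+q2*h0)" for q0 q1 q2 h0 h1 h2 v :: complex
    by (simp add: algebra_simps power2_eq_square power3_eq_cube)
  show G: "\<forall>v. ev ([:-1,1:]^n * h) v = ev A (v^3) + v * ev B (v^3) + v^2 * ev C (v^3)"
  proof
    fix v :: complex
    show "ev ([:-1,1:]^n * h) v = ev A (v^3) + v * ev B (v^3) + v^2 * ev C (v^3)"
      unfolding ev_mult ev_power ev_X1 hQ[rule_format] hH[rule_format] gen
      by (simp add: A_def B_def C_def algebra_simps)
  qed
  obtain w where w: "w^3 = z" using cube_root by blast
  have "nf (ev A z) (ev B z) (ev C z) z = ev ([:-1,1:]^n * h) w * ev ([:-1,1:]^n * h) (w*w3) * ev ([:-1,1:]^n * h) (w*w3^2)"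
    using norm3'[OF w3_eq G, of w] w by simp
  also have "\<dots> = ((w - 1) * (w*w3 - 1) * (w*w3^2 - 1))^n * (ev h w * ev h (w*w3) * ev h (w*w3^2))"
    by (simp only: ev_mult ev_power ev_X1 power_mult_distrib mult_ac)
  also have "\<dots> = (z - 1)^n * nf (ev H0 z) (ev H1 z) (ev H2 z) z"
    unfolding lin3[OF w3_eq] norm3'[OF w3_eq hH, of w] w ..
  finally show "nf (ev A z) (ev B z) (ev C z) z = (z - 1)^n * nf (ev H0 z) (ev H1 z) (ev H2 z) z" .
qed

definition RhP :: "int poly \<Rightarrow> int poly \<Rightarrow> int poly \<Rightarrow> int poly" where
  "RhP H0 H1 H2 = H0^3 + pX*H1^3 + pX^2*H2^3 - 3*pX*H0*H1*H2"

lemma ev_RhP: "ev (RhP H0 H1 H2) z = nf (ev H0 z) (ev H1 z) (ev H2 z) z"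
  unfolding RhP_def nf_def by simp

lemma poly_RhP_mod: "poly (RhP H0 H1 H2) 1 mod 3 = (poly H0 1 + poly H1 1 + poly H2 1) mod 3"
proof -
  have c: "3 dvd (a::int)^3 - a" for a
  proof -
    have e: "a^3 - a = (a - 1) * a * (a + 1)" by (simp add: algebra_simps power3_eq_cube)
    have "a mod 3 = 0 \<or> a mod 3 = 1 \<or> a mod 3 = 2" by presburger
    then have "3 dvd a - 1 \<or> 3 dvd a \<or> 3 dvd a + 1" by presburger
    then show ?thesis unfolding e by auto
  qed
  define a where "a = poly H0 1"
  define b where "b = poly H1 1"
  define c where "c = poly H2 1"
  have "poly (RhP H0 H1 H2) 1 = a^3 + b^3 + c^3 - 3*a*b*c" unfolding RhP_def a_def b_def c_def by simp
  moreover have "3 dvd (a^3 + b^3 + c^3 - 3*a*b*c) - (a + b + c)"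
  proof -
    have eq: "(a^3 + b^3 + c^3 - 3*a*b*c) - (a + b + c) = (a^3 - a) + (b^3 - b) + (c^3 - c) - 3*(a*b*c)" by simp
    show ?thesis unfolding eq
      by (rule dvd_diff[OF dvd_add[OF dvd_add[OF c c] c]]) simp
  qed
  ultimately show ?thesis unfolding a_def[symmetric] b_def[symmetric] c_def[symmetric] by (simp only: mod_eq_dvd_iff)
qed

lemma step_generic:
  assumes k: "k \<ge> 1"
      and hQ: "\<forall>v. (v - 1)^n = ev Q0 (v^3) + v * ev Q1 (v^3) + v^2 * ev Q2 (v^3)"
      and hH: "\<forall>v. ev h v = ev H0 (v^3) + v * ev H1 (v^3) + v^2 * ev H2 (v^3)"
  defines "A \<equiv> Q0*H0 + pX*(Q1*H2 + Q2*H1)" and "B \<equiv> Q0*H1 + Q1*H0 + pX*Q2*H2"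
      and "C \<equiv> Q0*H2 + Q1*H1 + Q2*H0"
  shows "Nk (Suc k) (1 + [:-1,1:]^n * h) =
     (\<Prod>l\<in>S k. 1 + 3 * ev (A + A^2 - pX*B*C) (omega k ^ l) + (omega k ^ l - 1)^n * ev (RhP H0 H1 H2) (omega k ^ l))"
proof -
  note G = nf_mult[OF hQ hH, folded A_def B_def C_def]
  have dec: "\<forall>v. ev (1 + [:-1,1:]^n * h) v = ev (1 + A) (v^3) + v * ev B (v^3) + v^2 * ev C (v^3)"
    using G(1) by simp
  show ?thesis unfolding descent[OF k dec]
    by (rule prod.cong[OF refl]) (simp add: nf_shift G(2) ev_RhP)
qed

lemma geo: "(z - 1) * (\<Sum>i<M. z^i) = z^M - (1::complex)"
  by (induction M) (simp_all add: algebra_simps)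

lemma ev_sum: "ev (\<Sum>i<M. pX^i) z = (\<Sum>i<M. z^i)"
  by (induction M) simp_all

lemma three_pi6:
  assumes k: "k \<ge> 2"
  shows "\<exists>W. \<forall>l\<in>S k. 3 = (omega k ^ l - 1)^6 * ev W (omega k ^ l)"
proof -
  define M :: nat where "M = 3^(k-2)"
  define T where "T = pX^M"
  define W where "W = (\<Sum>i<M. pX^i)^6 * (10 + 11*T + 7*T^2 + 10*T^3 + 4*T^4 - 4*T^5)"
  show ?thesis
  proof (intro exI ballI)
    fix l assume l: "l \<in> S k"
    define z where "z = omega k ^ l"
    define u where "u = z^M"
    have "(u^3)^2 + u^3 + 1 = 0"
    proof -
      obtain k' where k': "k = Suc (Suc k')" using k by (metis add_2_eq_Suc le_Suc_ex)
      have "M * 3 = 3^(k-1)" unfolding M_def k' by simp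
      then have "u^3 = z^(3^(k-1))" unfolding u_def by (metis power_mult)
      then show ?thesis using omega_prim[of k l] k l unfolding z_def by simp
    qed
    then have u6: "u^6 + u^3 + 1 = 0" by (simp add: power_mult[symmetric])
    have "3 = (u - 1)^6 * (10 + 11*u + 7*u^2 + 10*u^3 + 4*u^4 - 4*u^5)"
      using u6 by algebra
    also have "u - 1 = (z - 1) * (\<Sum>i<M. z^i)" unfolding u_def geo ..
    finally show "3 = (omega k ^ l - 1)^6 * ev W (omega k ^ l)"
      unfolding W_def T_def z_def[symmetric] u_def by (simp add: ev_sum power_mult_distrib mult_ac)
  qed
qed

lemma absorb5:
  fixes z w e r :: complex
  assumes "3 = (z-1)^6 * w"
  shows "1 + 3*e + (z-1)^5*r = 1 + (z-1)^5*(r + (z-1)*w*e)"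
  using assms by algebra

lemma absorb7:
  fixes z w r a1 a2 b c1 c2 :: complex
  assumes "3 = (z-1)^6 * w"
  shows "1 + 3*((((z-1)^2*a1 + 3*a2)) + ((z-1)^2*a1 + 3*a2)^2 - z*b*((z-1)^2*c1 + 3*c2)) + (z-1)^7*r
       = 1 + (z-1)^7*(r + (z-1)*(w*(a1 + ((z-1)^2*a1 + 3*a2)*a1 - z*b*c1) + (z-1)^4*w^2*(a2 + ((z-1)^2*a1 + 3*a2)*a2 - z*b*c2)))"
  using assms by algebra

lemma chain:
  fixes f :: "int poly \<Rightarrow> int poly" and h :: "int poly"
  assumes step: "\<And>k h. 2 \<le> k \<Longrightarrow> \<exists>h'. Nk (Suc k) (f h) = Nk k (f h') \<and> 3 dvd poly h' 1 - poly h 1"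
  shows "2 \<le> j \<Longrightarrow> \<exists>h'. Nk (j + d) (f h) = Nk j (f h') \<and> 3 dvd poly h' 1 - poly h 1"
proof (induction d arbitrary: h)
  case 0 then show ?case by (intro exI[of _ h]) simp
next
  case (Suc d)
  obtain h1 where h1: "Nk (Suc (j + d)) (f h) = Nk (j + d) (f h1)" "3 dvd poly h1 1 - poly h 1"
    using step[of "j + d" h] Suc.prems by auto
  obtain h2 where h2: "Nk (j + d) (f h1) = Nk j (f h2)" "3 dvd poly h2 1 - poly h1 1"
    using Suc.IH[of h1] Suc.prems by auto
  have "3 dvd (poly h2 1 - poly h1 1) + (poly h1 1 - poly h 1)" using h1 h2 by (rule_tac dvd_add) auto
  then show ?case using h1 h2 by (intro exI[of _ h2]) simp
qed

lemma step5:
  assumes k: "2 \<le> k"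
  shows "\<exists>h'. Nk (Suc k) (1 + [:-1,1:]^5 * h) = Nk k (1 + [:-1,1:]^5 * h') \<and> 3 dvd poly h' 1 - poly h 1"
proof -
  obtain H0 H1 H2 where hH: "\<forall>v. ev h v = ev H0 (v^3) + v * ev H1 (v^3) + v^2 * ev H2 (v^3)"
    and h1: "poly h 1 = poly H0 1 + poly H1 1 + poly H2 1" using decomp3[of h] by blast
  define Q0 :: "int poly" where "Q0 = 10*pX - 1"
  define Q1 :: "int poly" where "Q1 = 5 - 5*pX"
  define Q2 :: "int poly" where "Q2 = pX - 10"
  have hQ: "\<forall>v. (v - 1)^5 = ev Q0 (v^3) + v * ev Q1 (v^3) + v^2 * ev Q2 (v^3)"
    unfolding Q0_def Q1_def Q2_def by (simp add: algebra_simps power2_eq_square power3_eq_cube eval_nat_numeral)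
  define A where "A \<equiv> Q0*H0 + pX*(Q1*H2 + Q2*H1)"
  define B where "B \<equiv> Q0*H1 + Q1*H0 + pX*Q2*H2"
  define C where "C \<equiv> Q0*H2 + Q1*H1 + Q2*H0"
  define E where "E = A + A^2 - pX*B*C"
  obtain W where W: "\<forall>l\<in>S k. 3 = (omega k ^ l - 1)^6 * ev W (omega k ^ l)"
    using three_pi6[OF k] by blast
  define h' where "h' = RhP H0 H1 H2 + [:-1,1:] * W * E"
  have "Nk (Suc k) (1 + [:-1,1:]^5 * h) = (\<Prod>l\<in>S k. 1 + 3 * ev E (omega k ^ l) + (omega k ^ l - 1)^5 * ev (RhP H0 H1 H2) (omega k ^ l))"
    unfolding E_def A_def B_def C_def using k by (intro step_generic[OF _ hQ hH]) simp
  also have "\<dots> = Nk k (1 + [:-1,1:]^5 * h')"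
    unfolding Nk_ev
  proof (rule prod.cong[OF refl])
    fix l assume "l \<in> S k"
    then show "1 + 3 * ev E (omega k ^ l) + (omega k ^ l - 1)^5 * ev (RhP H0 H1 H2) (omega k ^ l) = ev (1 + [:-1,1:]^5 * h') (omega k ^ l)"
      unfolding h'_def ev_add ev_mult ev_power ev_X1 ev_1 using absorb5[OF W[rule_format]] by (simp only: mult.assoc)
  qed
  finally show ?thesis
  proof (intro exI conjI)
    have "poly h' 1 = poly (RhP H0 H1 H2) 1" unfolding h'_def by simp
    then show "3 dvd poly h' 1 - poly h 1" using poly_RhP_mod[of H0 H1 H2] h1 by (simp add: mod_eq_dvd_iff)
  qed
qed

lemma step7:
  assumes k: "2 \<le> k"
  shows "\<exists>h'. Nk (Suc k) (1 + [:-1,1:]^7 * h) = Nk k (1 + [:-1,1:]^7 * h') \<and> 3 dvd poly h' 1 - poly h 1"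
proof -
  obtain H0 H1 H2 where hH: "\<forall>v. ev h v = ev H0 (v^3) + v * ev H1 (v^3) + v^2 * ev H2 (v^3)"
    and h1: "poly h 1 = poly H0 1 + poly H1 1 + poly H2 1" using decomp3[of h] by blast
  define Q0 :: "int poly" where "Q0 = 35*pX - 1 - 7*pX^2"
  define Q1 :: "int poly" where "Q1 = 7 - 35*pX + pX^2"
  define Q2 :: "int poly" where "Q2 = 21*pX - 21"
  have hQ: "\<forall>v. (v - 1)^7 = ev Q0 (v^3) + v * ev Q1 (v^3) + v^2 * ev Q2 (v^3)"
    unfolding Q0_def Q1_def Q2_def by (simp add: algebra_simps power2_eq_square power3_eq_cube eval_nat_numeral)
  define A where "A \<equiv> Q0*H0 + pX*(Q1*H2 + Q2*H1)"
  define B where "B \<equiv> Q0*H1 + Q1*H0 + pX*Q2*H2"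
  define C where "C \<equiv> Q0*H2 + Q1*H1 + Q2*H0"
  define A1 :: "int poly" where "A1 = -7*H0 + pX*H2"
  define A2 :: "int poly" where "A2 = (7*pX+2)*H0 + pX*((2 - 11*pX)*H2 + (7*pX - 7)*H1)"
  define C1 :: "int poly" where "C1 = -7*H2 + H1"
  define C2 :: "int poly" where "C2 = (7*pX+2)*H2 + (2 - 11*pX)*H1 + (7*pX - 7)*H0"
  have eA: "ev A z = (z-1)^2 * ev A1 z + 3 * ev A2 z" for z
    unfolding A_def A1_def A2_def Q0_def Q1_def Q2_def by (simp add: algebra_simps power2_eq_square)
  have eC: "ev C z = (z-1)^2 * ev C1 z + 3 * ev C2 z" for z
    unfolding C_def C1_def C2_def Q0_def Q1_def Q2_def by (simp add: algebra_simps power2_eq_square)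
  define Yp where "Yp = A1 + A*A1 - pX*B*C1"
  define Xp where "Xp = A2 + A*A2 - pX*B*C2"
  obtain W where W: "\<forall>l\<in>S k. 3 = (omega k ^ l - 1)^6 * ev W (omega k ^ l)"
    using three_pi6[OF k] by blast
  define h' where "h' = RhP H0 H1 H2 + [:-1,1:] * (W * Yp + [:-1,1:]^4 * W^2 * Xp)"
  have "Nk (Suc k) (1 + [:-1,1:]^7 * h) = (\<Prod>l\<in>S k. 1 + 3 * ev (A + A^2 - pX*B*C) (omega k ^ l) + (omega k ^ l - 1)^7 * ev (RhP H0 H1 H2) (omega k ^ l))"
    unfolding A_def B_def C_def using k by (intro step_generic[OF _ hQ hH]) simp
  also have "\<dots> = Nk k (1 + [:-1,1:]^7 * h')"
    unfolding Nk_ev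
  proof (rule prod.cong[OF refl])
    fix l assume l: "l \<in> S k"
    define z where "z = omega k ^ l"
    have "1 + 3 * ev (A + A^2 - pX*B*C) z + (z - 1)^7 * ev (RhP H0 H1 H2) z =
      1 + 3*((((z-1)^2*ev A1 z + 3*ev A2 z)) + ((z-1)^2*ev A1 z + 3*ev A2 z)^2 - z*ev B z*((z-1)^2*ev C1 z + 3*ev C2 z)) + (z-1)^7*ev (RhP H0 H1 H2) z"
      by (simp only: ev_add ev_diff ev_mult ev_power ev_pX eA eC)
    also have "\<dots> = 1 + (z-1)^7*(ev (RhP H0 H1 H2) z + (z-1)*(ev W z*(ev A1 z + ((z-1)^2*ev A1 z + 3*ev A2 z)*ev A1 z - z*ev B z*ev C1 z) + (z-1)^4*(ev W z)^2*(ev A2 z + ((z-1)^2*ev A1 z + 3*ev A2 z)*ev A2 z - z*ev B z*ev C2 z)))"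
      by (rule absorb7) (use W l z_def in blast)
    also have "\<dots> = ev (1 + [:-1,1:]^7 * h') z"
      unfolding h'_def Yp_def Xp_def by (simp only: ev_add ev_diff ev_mult ev_power ev_X1 ev_1 ev_pX eA)
    finally show "1 + 3 * ev (A + A^2 - pX*B*C) (omega k ^ l) + (omega k ^ l - 1)^7 * ev (RhP H0 H1 H2) (omega k ^ l) = ev (1 + [:-1,1:]^7 * h') (omega k ^ l)"
      unfolding z_def .
  qed
  finally show ?thesis
  proof (intro exI conjI)
    have "poly h' 1 = poly (RhP H0 H1 H2) 1" unfolding h'_def by simp
    then show "3 dvd poly h' 1 - poly h 1" using poly_RhP_mod[of H0 H1 H2] h1 by (simp add: mod_eq_dvd_iff)
  qed
qed

lemma ev_smult[simp]: "ev (smult c p) z = of_int c * ev p z"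
  by (simp add: ev_def map_poly_smult)

lemma pair3: "\<exists>a b::int. (\<forall>z. z^2+z+1=0 \<longrightarrow> ev p z = of_int a + of_int b * z) \<and> 3 dvd (a + b) - poly p 1"
proof (induction p)
  case 0 then show ?case by (intro exI[of _ 0]) simp
next
  case (pCons c p)
  then obtain a b where ab: "\<forall>z. z^2+z+1=0 \<longrightarrow> ev p z = of_int a + of_int b * z" "3 dvd (a + b) - poly p 1"
    by blast
  show ?case
  proof (intro exI conjI allI impI)
    fix z :: complex assume z: "z^2+z+1=0"
    have "ev (pCons c p) z = of_int c + z * (of_int a + of_int b * z)" using ab(1) z by simp
    also have "\<dots> = of_int (c - b) + of_int (a - b) * z"
      unfolding of_int_diff using z by algebra
    finally show "ev (pCons c p) z = of_int (c - b) + of_int (a - b) * z" .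
  next
    have eq: "(c - b + (a - b)) - poly (pCons c p) 1 = ((a + b) - poly p 1) - 3 * b" by simp
    show "3 dvd (c - b + (a - b)) - poly (pCons c p) 1" unfolding eq by (rule dvd_diff[OF ab(2)]) simp
  qed
qed

lemma S1: "S 1 = {1,2}"
  unfolding S_def by (auto; presburger)

lemma final_id:
  fixes z :: complex
  assumes z: "z^2 + z + 1 = 0"
  shows "(1 - z) * (1 + 3 * ((z-1)*(of_int s0 + of_int s1 * z) + 3*(of_int x0 + of_int x1 * z) + (z-1)^2*(of_int y0 + of_int y1 * z)) + (z-1)^5 * (of_int r0 + of_int r1 * z))
    = (1 - z) + 9 * (of_int (s0 - 2*s1 + 3*(x1 - y0 + y1 + r0 + r1)) + of_int (-(s0 - s1 - x0 + 2*x1 - 2*y0 + y1 + 3*r1)) * (1 - z))"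
  using z by (simp add: of_int_add of_int_mult of_int_diff of_int_minus) algebra

lemma eE_gen:
  fixes a b c z sa sb sc aa bb cc s t :: complex
  assumes "a = (z-1)*sa + 3*aa" "b = (z-1)*sb + 3*bb" "c = (z-1)*sc + 3*cc" "sa = s + (z-1)*t"
  shows "a + a^2 - z*b*c = (z-1)*s + 3*(aa + 2*(z-1)*sa*aa + 3*aa^2 - z*((z-1)*(sb*cc + sc*bb) + 3*bb*cc)) + (z-1)^2*(t + sa^2 - z*sb*sc)"
  unfolding assms(1-3) using assms(4) by algebra

lemma final5:
  "\<exists>A B::int. 3 * Nk 2 (1 + [:-1,1:]^5 * h) = Nk 1 ([:1,-1:] + smult 9 ([:A:] + smult B [:1,-1:])) \<and> (3 dvd A \<longleftrightarrow> 3 dvd poly h 1)"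
proof -
  obtain H0 H1 H2 where hH: "\<forall>v. ev h v = ev H0 (v^3) + v * ev H1 (v^3) + v^2 * ev H2 (v^3)"
    and h1: "poly h 1 = poly H0 1 + poly H1 1 + poly H2 1" using decomp3[of h] by blast
  define Q0 :: "int poly" where "Q0 = 10*pX - 1"
  define Q1 :: "int poly" where "Q1 = 5 - 5*pX"
  define Q2 :: "int poly" where "Q2 = pX - 10"
  have hQ: "\<forall>v. (v - 1)^5 = ev Q0 (v^3) + v * ev Q1 (v^3) + v^2 * ev Q2 (v^3)"
    unfolding Q0_def Q1_def Q2_def by (simp add: algebra_simps power2_eq_square power3_eq_cube eval_nat_numeral)
  define A where "A \<equiv> Q0*H0 + pX*(Q1*H2 + Q2*H1)"
  define B where "B \<equiv> Q0*H1 + Q1*H0 + pX*Q2*H2"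
  define C where "C \<equiv> Q0*H2 + Q1*H1 + Q2*H0"
  define E where "E = A + A^2 - pX*B*C"
  define D0 :: "int poly" where "D0 = 3*pX"
  define D1 :: "int poly" where "D1 = 2 - 2*pX"
  define D2 :: "int poly" where "D2 = -3"
  define Sa where "Sa = H0 + pX*(H2 + H1)"
  define Aa where "Aa = D0*H0 + pX*(D1*H2 + D2*H1)"
  define Sb where "Sb = H1 + H0 + pX*H2"
  define Bb where "Bb = D0*H1 + D1*H0 + pX*D2*H2"
  define Sc where "Sc = H2 + H1 + H0"
  define Cc where "Cc = D0*H2 + D1*H1 + D2*H0"
  define Yp where "Yp = (H1+H2) + Sa^2 - pX*Sb*Sc"
  define Xp where "Xp = Aa + 2*(pX-1)*Sa*Aa + 3*Aa^2 - pX*((pX-1)*(Sb*Cc + Sc*Bb) + 3*Bb*Cc)"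
  define Sp where "Sp = H0 + H1 + H2"
  have eE: "ev E z = (z-1)*ev Sp z + 3*ev Xp z + (z-1)^2*ev Yp z" for z
  proof -
    have eA: "ev A z = (z-1)*ev Sa z + 3*ev Aa z"
      unfolding A_def Sa_def Aa_def D0_def D1_def D2_def Q0_def Q1_def Q2_def by (simp add: algebra_simps)
    have eB: "ev B z = (z-1)*ev Sb z + 3*ev Bb z"
      unfolding B_def Sb_def Bb_def D0_def D1_def D2_def Q0_def Q1_def Q2_def by (simp add: algebra_simps)
    have eC: "ev C z = (z-1)*ev Sc z + 3*ev Cc z"
      unfolding C_def Sc_def Cc_def D0_def D1_def D2_def Q0_def Q1_def Q2_def by (simp add: algebra_simps)
    have eS: "ev Sa z = ev Sp z + (z-1)*(ev H1 z + ev H2 z)"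
      unfolding Sa_def Sp_def by (simp add: algebra_simps)
    have "ev E z = ev A z + (ev A z)^2 - z * ev B z * ev C z" unfolding E_def by simp
    also have "\<dots> = (z-1)*ev Sp z + 3*(ev Aa z + 2*(z-1)*ev Sa z*ev Aa z + 3*(ev Aa z)^2 - z*((z-1)*(ev Sb z*ev Cc z + ev Sc z*ev Bb z) + 3*ev Bb z*ev Cc z)) + (z-1)^2*((ev H1 z + ev H2 z) + (ev Sa z)^2 - z*ev Sb z*ev Sc z)"
      by (rule eE_gen[OF eA eB eC eS])
    also have "\<dots> = (z-1)*ev Sp z + 3*ev Xp z + (z-1)^2*ev Yp z"
      unfolding Xp_def Yp_def by (simp only: ev_add ev_diff ev_mult ev_power ev_pX ev_numeral ev_1)
    finally show ?thesis .
  qed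
  obtain s0 s1 where s: "\<forall>z. z^2+z+1=0 \<longrightarrow> ev Sp z = of_int s0 + of_int s1 * z" "3 dvd (s0 + s1) - poly Sp 1"
    using pair3[of Sp] by blast
  obtain x0 x1 where x: "\<forall>z. z^2+z+1=0 \<longrightarrow> ev Xp z = of_int x0 + of_int x1 * z"
    using pair3[of Xp] by blast
  obtain y0 y1 where y: "\<forall>z. z^2+z+1=0 \<longrightarrow> ev Yp z = of_int y0 + of_int y1 * z"
    using pair3[of Yp] by blast
  obtain r0 r1 where r: "\<forall>z. z^2+z+1=0 \<longrightarrow> ev (RhP H0 H1 H2) z = of_int r0 + of_int r1 * z"
    using pair3[of "RhP H0 H1 H2"] by blast
  define A' where "A' = s0 - 2*s1 + 3*(x1 - y0 + y1 + r0 + r1)"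
  define B' where "B' = -(s0 - s1 - x0 + 2*x1 - 2*y0 + y1 + 3*r1)"
  define P where "P = [:1,-1:] + smult 9 ([:A':] + smult B' [:1,-1:])"
  define V where "V = (\<lambda>z. 1 + 3 * ev E z + (z - 1)^5 * ev (RhP H0 H1 H2) z)"
  have zprim: "(omega 1 ^ l)^2 + omega 1 ^ l + 1 = 0" if "l \<in> S 1" for l
    using omega_prim[of 1 l] that by simp
  have N2: "Nk 2 (1 + [:-1,1:]^5 * h) = (\<Prod>l\<in>S 1. V (omega 1 ^ l))"
    using step_generic[OF _ hQ hH, of 1] unfolding V_def E_def A_def B_def C_def by (simp add: numeral_2_eq_2)
  have PV: "ev P (omega 1 ^ l) = (1 - omega 1 ^ l) * V (omega 1 ^ l)" if "l \<in> S 1" for l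
  proof -
    define z where "z = omega 1 ^ l"
    have z: "z^2 + z + 1 = 0" using zprim[OF that] unfolding z_def .
    have "(1 - z) * V z = (1 - z) * (1 + 3 * ((z-1)*(of_int s0 + of_int s1 * z) + 3*(of_int x0 + of_int x1 * z) + (z-1)^2*(of_int y0 + of_int y1 * z)) + (z-1)^5 * (of_int r0 + of_int r1 * z))"
      unfolding V_def eE using s(1) x y r z by simp
    also have "\<dots> = ev P z" unfolding final_id[OF z] P_def A'_def B'_def by (simp add: algebra_simps)
    finally show ?thesis unfolding z_def by simp
  qed
  have "(1::nat) \<in> S 1" unfolding S_def by simp
  then have w: "(omega 1)^2 + omega 1 + 1 = 0" using zprim by fastforce
  have prod1: "(\<Prod>l\<in>S 1. (1 - omega 1 ^ l)) = 3"
  proof -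
    have "(\<Prod>l\<in>S 1. (1 - omega 1 ^ l)) = (1 - omega 1) * (1 - (omega 1)^2)" unfolding S1 by (simp add: power2_eq_square)
    also have "\<dots> = 3" using w by algebra
    finally show ?thesis .
  qed
  have "Nk 1 P = (\<Prod>l\<in>S 1. (1 - omega 1 ^ l) * V (omega 1 ^ l))"
    unfolding Nk_ev by (rule prod.cong[OF refl]) (rule PV)
  also have "\<dots> = 3 * Nk 2 (1 + [:-1,1:]^5 * h)"
    unfolding prod.distrib prod1 N2 ..
  finally have main: "3 * Nk 2 (1 + [:-1,1:]^5 * h) = Nk 1 P" by simp
  have "3 dvd A' \<longleftrightarrow> 3 dvd (s0 + s1)"
  proof -
    have "A' = (s0 + s1) + 3 * (x1 - y0 + y1 + r0 + r1 - s1)" unfolding A'_def by simp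
    then show ?thesis by (metis dvd_add_left_iff dvd_triv_left)
  qed
  also have "\<dots> \<longleftrightarrow> 3 dvd poly h 1"
  proof -
    have "poly Sp 1 = poly h 1" unfolding Sp_def h1 by simp
    then have "3 dvd (s0 + s1) - poly h 1" using s(2) by simp
    then show ?thesis using dvd_add_right_iff[of 3 "s0 + s1 - poly h 1" "poly h 1"] by simp
  qed
  finally have dv: "3 dvd A' \<longleftrightarrow> 3 dvd poly h 1" .
  show ?thesis
    by (rule exI[of _ A'], rule exI[of _ B'], rule conjI[OF main[unfolded P_def] dv])
qed

lemma dvd3_iff: "3 dvd (x::int) - y \<Longrightarrow> (3 dvd x \<longleftrightarrow> 3 dvd y)"
  by (metis dvd_add_right_iff diff_add_cancel)

lemma chain5: "2 \<le> j \<Longrightarrow> j \<le> i \<Longrightarrow> \<exists>h'. Nk i (1 + [:-1,1:]^5 * h) = Nk j (1 + [:-1,1:]^5 * h') \<and> 3 dvd poly h' 1 - poly h 1"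
  using chain[where f = "\<lambda>h. 1 + [:-1,1:]^5 * h", OF step5, where j = j and d = "i - j" and h = h] by simp

lemma chain7: "2 \<le> j \<Longrightarrow> j \<le> i \<Longrightarrow> \<exists>h'. Nk i (1 + [:-1,1:]^7 * h) = Nk j (1 + [:-1,1:]^7 * h') \<and> 3 dvd poly h' 1 - poly h 1"
  using chain[where f = "\<lambda>h. 1 + [:-1,1:]^7 * h", OF step7, where j = j and d = "i - j" and h = h] by simp

theorem lemma4p4:
  fixes m :: int and i :: nat
  assumes "i \<ge> 2"
  shows "(\<forall>h :: int poly.
            of_int m = Nk i (1 + [:-1, 1:] ^ 5 * h) \<longrightarrow>
              (\<forall>j. 2 \<le> j \<and> j \<le> i \<longrightarrow>
                 (\<exists>hj :: int poly. of_int m = Nk j (1 + [:-1, 1:] ^ 5 * hj) \<and>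
                    (3 dvd poly hj 1 \<longleftrightarrow> 3 dvd poly h 1))) \<and>
              (\<exists>A B :: int.
                 of_int (3 * m) = Nk 1 ([:1, -1:] + smult 9 ([:A:] + smult B [:1, -1:])) \<and>
                 (\<not> 3 dvd poly h 1 \<longrightarrow> \<not> 3 dvd A) \<and>
                 (3 dvd poly h 1 \<longrightarrow> 3 dvd A)))
       \<and> (\<forall>t :: int poly.
            of_int m = Nk i (1 + [:-1, 1:] ^ 7 * t) \<longrightarrow>
              (\<forall>j. 2 \<le> j \<and> j \<le> i \<longrightarrow>
                 (\<exists>tj :: int poly. of_int m = Nk j (1 + [:-1, 1:] ^ 7 * tj) \<and>
                    (3 dvd poly tj 1 \<longleftrightarrow> 3 dvd poly t 1))))"
proof (intro conjI allI impI)
  fix h :: "int poly"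
  assume hm: "of_int m = Nk i (1 + [:-1, 1:] ^ 5 * h)"
  {
    fix j assume j: "2 \<le> j \<and> j \<le> i"
    then obtain hj where "Nk i (1 + [:-1,1:]^5 * h) = Nk j (1 + [:-1,1:]^5 * hj)" "3 dvd poly hj 1 - poly h 1"
      using chain5[of j i h] by blast
    then show "\<exists>hj :: int poly. of_int m = Nk j (1 + [:-1, 1:] ^ 5 * hj) \<and> (3 dvd poly hj 1 \<longleftrightarrow> 3 dvd poly h 1)"
      using hm dvd3_iff by metis
  }
  obtain h2 where h2: "Nk i (1 + [:-1,1:]^5 * h) = Nk 2 (1 + [:-1,1:]^5 * h2)" "3 dvd poly h2 1 - poly h 1"
    using chain5[of 2 i h] assms by blast
  obtain A B where AB: "3 * Nk 2 (1 + [:-1,1:]^5 * h2) = Nk 1 ([:1,-1:] + smult 9 ([:A:] + smult B [:1,-1:]))"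
      "3 dvd A \<longleftrightarrow> 3 dvd poly h2 1"
    using final5[of h2] by blast
  have "of_int (3 * m) = Nk 1 ([:1,-1:] + smult 9 ([:A:] + smult B [:1,-1:]))"
    using AB(1) h2(1) hm by simp
  moreover have "3 dvd A \<longleftrightarrow> 3 dvd poly h 1" using AB(2) dvd3_iff[OF h2(2)] by simp
  ultimately show "\<exists>A B :: int.
                 of_int (3 * m) = Nk 1 ([:1, -1:] + smult 9 ([:A:] + smult B [:1, -1:])) \<and>
                 (\<not> 3 dvd poly h 1 \<longrightarrow> \<not> 3 dvd A) \<and>
                 (3 dvd poly h 1 \<longrightarrow> 3 dvd A)" by blast
next
  fix t :: "int poly" and j
  assume hm: "of_int m = Nk i (1 + [:-1, 1:] ^ 7 * t)" and j: "2 \<le> j \<and> j \<le> i"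
  then obtain tj where "Nk i (1 + [:-1,1:]^7 * t) = Nk j (1 + [:-1,1:]^7 * tj)" "3 dvd poly tj 1 - poly t 1"
    using chain7[of j i t] by blast
  then show "\<exists>tj :: int poly. of_int m = Nk j (1 + [:-1, 1:] ^ 7 * tj) \<and> (3 dvd poly tj 1 \<longleftrightarrow> 3 dvd poly t 1)"
    using hm dvd3_iff by metis
qed

end
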